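(* Let $H_1$ and $H_2$ be two bipartite graphs with $\mathrm{ex}(n, H_1) = O(n^{1 + \alpha})$ and $\mathrm{ex}(n, H_2) = O(n^{1 + \beta})$. Fix $e_1 \in E(H_1)$ and $e_2 \in E(H_2)$. Then the family $\mathcal{H}$ of graphs formed by identifying $e_1$ and $e_2$ satisfies $$\mathrm{ex}(n, \mathcal{H}) = O(n^{1 + \max\{\alpha, \beta\}}).$$
   Context: For a family $\mathcal{H}$ of graphs, $\mathrm{ex}(n,\mathcal{H})$ is the maximum number of edges in an $n$-vertex graph containing no copy of any member of $\mathcal{H}$; $\mathrm{ex}(n,H)=\mathrm{ex}(n,\{H\})$. Identifying an edge $e_1=ab$ of $H_1$ with an edge $e_2=cd$ of $H_2$ means: take the vertex-disjoint union of $H_1$ and $H_2$ and either identify $a$ with $c$ and $b$ with $d$, or identify $a$ with $d$ and $b$ with $c$ (the two resulting edges become one edge). The family $\mathcal{H}$ consists of the (at most two) graphs obtained in these two ways. *)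

theory Defs
  imports Main "HOL-Library.Landau_Symbols"
begin

type_synonym 'a graph = "'a set \<times> 'a set set"

definition is_graph :: "'a graph \<Rightarrow> bool" where
  "is_graph G \<longleftrightarrow> finite (fst G) \<and>
     (\<forall>e\<in>snd G. \<exists>x y. x \<noteq> y \<and> x \<in> fst G \<and> y \<in> fst G \<and> e = {x, y})"

definition bipartite :: "'a graph \<Rightarrow> bool" where
  "bipartite G \<longleftrightarrow> (\<exists>A B. A \<inter> B = {} \<and> A \<union> B = fst G \<and>
     (\<forall>e\<in>snd G. \<exists>x y. x \<in> A \<and> y \<in> B \<and> e = {x, y}))"

definition contains_copy :: "'b graph \<Rightarrow> 'a graph \<Rightarrow> bool" where
  "contains_copy G H \<longleftrightarrow> (\<exists>f. inj_on f (fst H) \<and> f ` fst H \<subseteq> fst G \<and>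
     (\<forall>e\<in>snd H. f ` e \<in> snd G))"

definition ex :: "nat \<Rightarrow> 'a graph set \<Rightarrow> nat" where
  "ex n F = Max {card E | E. is_graph ({..<n}, E) \<and>
                   (\<forall>H\<in>F. \<not> contains_copy ({..<n}, E) H)}"

text \<open>Identifying edge ab of H1 with edge cd of H2 (a with c, b with d):
  take the disjoint union on 'a + 'b and map c to Inl a, d to Inl b.\<close>
definition glue_map :: "'b \<Rightarrow> 'b \<Rightarrow> 'a \<Rightarrow> 'a \<Rightarrow> 'b \<Rightarrow> 'a + 'b" where
  "glue_map c d a b x = (if x = c then Inl a else if x = d then Inl b else Inr x)"

definition identify :: "'a graph \<Rightarrow> 'b graph \<Rightarrow> 'a \<Rightarrow> 'a \<Rightarrow> 'b \<Rightarrow> 'b \<Rightarrow> ('a + 'b) graph" where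
  "identify H1 H2 a b c d =
     (Inl ` fst H1 \<union> glue_map c d a b ` fst H2,
      ((`) Inl) ` snd H1 \<union> ((`) (glue_map c d a b)) ` snd H2)"

definition identify_family :: "'a graph \<Rightarrow> 'b graph \<Rightarrow> 'a \<Rightarrow> 'a \<Rightarrow> 'b \<Rightarrow> 'b \<Rightarrow> ('a + 'b) graph set" where
  "identify_family H1 H2 a b c d = {identify H1 H2 a b c d, identify H1 H2 a b d c}"

end

theory Submission imports Defs begin

definition ecopy :: "'b set set \<Rightarrow> 'a graph \<Rightarrow> ('a \<Rightarrow> 'b) \<Rightarrow> bool" where
  "ecopy E H f \<longleftrightarrow> inj_on f (\<Union>(snd H)) \<and> (\<forall>e\<in>snd H. f ` e \<in> E)"

lemma graph_N_sub: "is_graph H \<Longrightarrow> \<Union>(snd H) \<subseteq> fst H"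
  unfolding is_graph_def by fastforce

lemma graph_edges_sub: "is_graph (V, E) \<Longrightarrow> E \<subseteq> Pow V"
  unfolding is_graph_def by fastforce

lemma copy_ecopy:
  assumes "is_graph H" "contains_copy G H" shows "\<exists>f. ecopy (snd G) H f"
  using assms graph_N_sub unfolding contains_copy_def ecopy_def by (meson inj_on_subset)

lemma ecopy_img:
  assumes "ecopy E H f" "\<forall>e\<in>E. e \<subseteq> S" shows "f ` \<Union>(snd H) \<subseteq> S"
  using assms unfolding ecopy_def by blast

lemma ecopy_copy:
  assumes fin: "finite (fst H)" and NV: "\<Union>(snd H) \<subseteq> fst H"
    and f: "ecopy E H f" and E: "\<forall>e\<in>E. e \<subseteq> {..<n}" and cardH: "card (fst H) \<le> n"
  shows "contains_copy ({..<n}, E) H"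
proof -
  let ?N = "\<Union>(snd H)" let ?V = "fst H"
  have finN: "finite ?N" using finite_subset[OF NV fin] .
  have inj: "inj_on f ?N" and fe: "\<forall>e\<in>snd H. f ` e \<in> E" using f unfolding ecopy_def by auto
  have fN: "f ` ?N \<subseteq> {..<n}" using ecopy_img[OF f E] .
  let ?I = "?V - ?N" let ?J = "{..<n} - f ` ?N"
  have cI: "card ?I = card ?V - card ?N" using card_Diff_subset[OF finN NV] .
  have cJ: "card ?J = n - card ?N"
    using card_Diff_subset[of "f`?N" "{..<n}"] fN card_image[OF inj] finN by simp
  have "card ?I \<le> card ?J" using cI cJ cardH card_mono[OF fin NV] by linarith
  then obtain g where g: "inj_on g ?I" "g ` ?I \<subseteq> ?J" using card_le_inj[of ?I ?J] fin by auto
  define h where "h x = (if x \<in> ?N then f x else g x)" for x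
  have "inj_on h ?V"
  proof (rule inj_onI)
    fix x y assume xy: "x \<in> ?V" "y \<in> ?V" "h x = h y"
    show "x = y"
    proof (cases "x \<in> ?N"; cases "y \<in> ?N")
      assume "x \<in> ?N" "y \<in> ?N" then show ?thesis using xy inj by (simp add: h_def inj_on_def) blast
    next
      assume "x \<in> ?N" "y \<notin> ?N" then show ?thesis using xy g by (auto simp: h_def)
    next
      assume "x \<notin> ?N" "y \<in> ?N" then show ?thesis using xy g by (auto simp: h_def)
    next
      assume "x \<notin> ?N" "y \<notin> ?N" then show ?thesis using xy g by (simp add: h_def inj_on_def)
    qed
  qed
  moreover have "h ` ?V \<subseteq> {..<n}"
  proof
    fix y assume "y \<in> h ` ?V"
    then obtain x where x: "x \<in> ?V" "y = h x" by blast
    show "y \<in> {..<n}"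
    proof (cases "x \<in> ?N")
      case True then show ?thesis using x fN by (auto simp: h_def)
    next
      case False then have "g x \<in> ?J" using x g(2) by blast
      then show ?thesis using x False by (simp add: h_def)
    qed
  qed
  moreover have "\<forall>e\<in>snd H. h ` e \<in> E"
  proof
    fix e assume e: "e \<in> snd H"
    then have "h ` e = f ` e" by (auto simp: h_def)
    then show "h ` e \<in> E" using fe e by simp
  qed
  ultimately show ?thesis unfolding contains_copy_def by auto
qed

lemma free_le_ex:
  assumes "is_graph ({..<n}, F)" "\<not> contains_copy ({..<n}, F) H"
  shows "card F \<le> ex n {H}"
proof -
  have "{card E |E. is_graph ({..<n}, E) \<and> (\<forall>H\<in>{H}. \<not> contains_copy ({..<n}, E) H)}
        \<subseteq> card ` Pow (Pow {..<n})" using graph_edges_sub by blast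
  then have "finite {card E |E. is_graph ({..<n}, E) \<and> (\<forall>H\<in>{H}. \<not> contains_copy ({..<n}, E) H)}"
    by (rule finite_subset) auto
  then show ?thesis unfolding ex_def using assms by (intro Max_ge) auto
qed

lemma ex_le:
  assumes ne: "\<forall>H\<in>Fam. snd H \<noteq> {}"
    and B: "\<And>E. is_graph ({..<n},E) \<Longrightarrow> \<forall>H\<in>Fam. \<not> contains_copy ({..<n},E) H \<Longrightarrow> card E \<le> B"
  shows "ex n Fam \<le> B"
proof -
  let ?A = "{card E |E. is_graph ({..<n}, E) \<and> (\<forall>H\<in>Fam. \<not> contains_copy ({..<n}, E) H)}"
  have "?A \<subseteq> card ` Pow (Pow {..<n})" using graph_edges_sub by blast
  then have fin: "finite ?A" by (rule finite_subset) auto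
  have "is_graph ({..<n}, {})" by (simp add: is_graph_def)
  moreover have "\<forall>H\<in>Fam. \<not> contains_copy ({..<n}, {}) H"
    using ne unfolding contains_copy_def by auto
  ultimately have "0 \<in> ?A" by force
  then have "?A \<noteq> {}" by blast
  moreover have "\<forall>x\<in>?A. x \<le> B" using B by blast
  ultimately show ?thesis unfolding ex_def using fin by simp
qed

lemma identify_N:
  "\<Union>(snd (identify H1 H2 a b c d)) = Inl ` \<Union>(snd H1) \<union> glue_map c d a b ` \<Union>(snd H2)"
  unfolding identify_def by auto

lemma identify_fin:
  assumes "finite (fst H1)" "finite (fst H2)"
  shows "finite (fst (identify H1 H2 a b c d))"
  using assms unfolding identify_def by auto

lemma identify_NV:
  assumes "is_graph H1" "is_graph H2"
  shows "\<Union>(snd (identify H1 H2 a b c d)) \<subseteq> fst (identify H1 H2 a b c d)"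
  using graph_N_sub[OF assms(1)] graph_N_sub[OF assms(2)]
  unfolding identify_N by (auto simp: identify_def)

lemma identify_card:
  fixes H1 :: "'a graph" and H2 :: "'b graph"
  assumes "finite (fst H1)" "finite (fst H2)"
  shows "card (fst (identify H1 H2 a b c d)) \<le> card (fst H1) + card (fst H2)"
proof -
  have "card (fst (identify H1 H2 a b c d)) \<le> card (Inl ` fst H1 :: ('a + 'b) set) + card (glue_map c d a b ` fst H2)"
    by (simp add: identify_def card_Un_le)
  also have "\<dots> \<le> card (fst H1) + card (fst H2)"
    by (intro add_mono card_image_le assms)
  finally show ?thesis .
qed

lemma glue:
  assumes ab: "{a,b} \<in> snd H1" and cd: "{c,d} \<in> snd H2"
   and f: "ecopy E H1 f" and g: "ecopy E H2 g"
   and fa: "f a = g c" and fb: "f b = g d"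
   and disj: "f ` \<Union>(snd H1) \<inter> (g ` \<Union>(snd H2) - {g c, g d}) = {}"
  shows "ecopy E (identify H1 H2 a b c d) (\<lambda>z. case z of Inl u \<Rightarrow> f u | Inr v \<Rightarrow> g v)"
proof -
  define h where "h = (\<lambda>z. case z of Inl u \<Rightarrow> f u | Inr v \<Rightarrow> g v)"
  let ?gm = "glue_map c d a b"
  let ?N1 = "\<Union>(snd H1)" let ?N2 = "\<Union>(snd H2)"
  have hg: "\<And>v. h (?gm v) = g v" using fa fb by (simp add: glue_map_def h_def)
  have injf: "inj_on f ?N1" and fE: "\<forall>e\<in>snd H1. f ` e \<in> E" using f unfolding ecopy_def by auto
  have injg: "inj_on g ?N2" and gE: "\<forall>e\<in>snd H2. g ` e \<in> E" using g unfolding ecopy_def by auto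
  have abN: "a \<in> ?N1" "b \<in> ?N1" using ab by auto
  have cdN: "c \<in> ?N2" "d \<in> ?N2" using cd by auto
  have set_eq: "Inl ` ?N1 \<union> ?gm ` ?N2 = Inl ` ?N1 \<union> Inr ` (?N2 - {c, d})"
    using abN cdN by (auto simp: glue_map_def)
  have inj: "inj_on h (Inl ` ?N1 \<union> Inr ` (?N2 - {c, d}))"
  proof (rule inj_onI)
    fix x y assume x: "x \<in> Inl ` ?N1 \<union> Inr ` (?N2 - {c, d})"
      and y: "y \<in> Inl ` ?N1 \<union> Inr ` (?N2 - {c, d})" and hxy: "h x = h y"
    have cross: False if u: "u \<in> ?N1" and v: "v \<in> ?N2 - {c,d}" and eq: "f u = g v" for u v
    proof -
      have "g v \<noteq> g c" "g v \<noteq> g d" using v cdN injg by (auto simp: inj_on_def)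
      then have "g v \<in> g ` ?N2 - {g c, g d}" using v by auto
      moreover have "g v \<in> f ` ?N1" using u eq by (metis imageI)
      ultimately show False using disj by blast
    qed
    show "x = y"
      using x y hxy injf injg cross unfolding h_def inj_on_def by (auto; metis)
  qed
  show ?thesis
    unfolding ecopy_def
  proof (intro conjI ballI)
    show "inj_on (\<lambda>z. case z of Inl u \<Rightarrow> f u | Inr v \<Rightarrow> g v) (\<Union>(snd (identify H1 H2 a b c d)))"
      using inj unfolding identify_N set_eq h_def .
  next
    fix e assume "e \<in> snd (identify H1 H2 a b c d)"
    then consider (l) e' where "e' \<in> snd H1" "e = Inl ` e'" | (r) e' where "e' \<in> snd H2" "e = ?gm ` e'"
      unfolding identify_def by auto
    then show "(\<lambda>z. case z of Inl u \<Rightarrow> f u | Inr v \<Rightarrow> g v) ` e \<in> E"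
    proof cases
      case l
      then have "(\<lambda>z. case z of Inl u \<Rightarrow> f u | Inr v \<Rightarrow> g v) ` e = f ` e'" by (auto simp: image_image)
      then show ?thesis using l fE by simp
    next
      case r
      then have "h ` e = g ` e'" using hg by (simp add: image_image)
      then show ?thesis using r gE h_def by simp
    qed
  qed
qed

lemma main_bound:
  fixes H1 :: "'a graph" and H2 :: "'b graph" and E :: "nat set set"
  assumes H1: "is_graph H1" and H2: "is_graph H2"
    and ab: "{a, b} \<in> snd H1" and cd: "{c, d} \<in> snd H2"
    and G: "is_graph ({..<n}, E)"
    and free: "\<forall>H\<in>identify_family H1 H2 a b c d. \<not> contains_copy ({..<n}, E) H"
    and nbig: "card (fst H1) + card (fst H2) + 2 \<le> n"
  shows "card E \<le> ex n {H2} + 2 ^ (card (fst H2) + 2) * ex n {H1}"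
proof -
  define U where "U = {..<n::nat}"
  define N1 where "N1 = \<Union>(snd H1)"
  define N2 where "N2 = \<Union>(snd H2)"
  define k2 where "k2 = card (fst H2)"
  have EU: "E \<subseteq> Pow U" using graph_edges_sub[OF G] U_def by simp
  have finU: "finite U" by (simp add: U_def)
  have finE: "finite E" using EU finU by (meson finite_Pow_iff finite_subset)
  have finV1: "finite (fst H1)" and finV2: "finite (fst H2)" using H1 H2 by (auto simp: is_graph_def)
  have finN2: "finite N2" using graph_N_sub[OF H2] finV2 N2_def finite_subset by auto
  have cN2: "card N2 \<le> k2" using card_mono[OF finV2 graph_N_sub[OF H2]] N2_def k2_def by simp
  define ES where "ES S = {e\<in>E. e \<subseteq> S}" for S
  define F1 where "F1 S = {e \<in> ES S. \<not>(\<exists>f. ecopy (ES S) H1 f \<and> f`{a,b} = e)}" for S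
  define F2 where "F2 = {e\<in>E. \<not>(\<exists>g. ecopy E H2 g \<and> g`{c,d} = e)}"
  define NR where "NR = {e\<in>E. \<exists>W. W \<subseteq> U \<and> card W \<le> k2 \<and> W \<inter> e = {} \<and>
      \<not>(\<exists>f. ecopy E H1 f \<and> f`{a,b} = e \<and> f`N1 \<inter> W = {})}"
  have cover: "E \<subseteq> F2 \<union> NR"
  proof
    fix e assume eE: "e \<in> E"
    show "e \<in> F2 \<union> NR"
    proof (rule ccontr)
      assume nin: "e \<notin> F2 \<union> NR"
      then obtain g where g: "ecopy E H2 g" "g`{c,d} = e" using eE F2_def by auto
      define W where "W = g`N2 - e"
      have "g ` N2 \<subseteq> U" using ecopy_img[OF g(1)] EU N2_def by blast
      then have WU: "W \<subseteq> U" using W_def by blast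
      have "card W \<le> card (g ` N2)" unfolding W_def using finN2 by (intro card_mono) auto
      also have "\<dots> \<le> card N2" by (rule card_image_le[OF finN2])
      finally have Wk: "card W \<le> k2" using cN2 by simp
      have We: "W \<inter> e = {}" using W_def by blast
      obtain f where f: "ecopy E H1 f" "f`{a,b} = e" "f`N1 \<inter> W = {}"
        using nin eE WU Wk We unfolding NR_def by blast
      have disj: "f ` N1 \<inter> (g ` N2 - {g c, g d}) = {}" using f(3) g(2) W_def by auto
      have cardI: "card (fst (identify H1 H2 a b x y)) \<le> n" for x y
        using identify_card[OF finV1 finV2, of a b x y] nbig by simp
      have Eb: "\<forall>e\<in>E. e \<subseteq> {..<n}" using EU U_def by auto
      from f(2) g(2) have "f a = g c \<and> f b = g d \<or> f a = g d \<and> f b = g c"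
        by (auto simp: doubleton_eq_iff)
      then show False
      proof
        assume fg: "f a = g c \<and> f b = g d"
        have "ecopy E (identify H1 H2 a b c d) (\<lambda>z. case z of Inl u \<Rightarrow> f u | Inr v \<Rightarrow> g v)"
          using glue[OF ab cd f(1) g(1)] fg disj N1_def N2_def by simp
        then have "contains_copy ({..<n}, E) (identify H1 H2 a b c d)"
          by (rule ecopy_copy[OF identify_fin[OF finV1 finV2] identify_NV[OF H1 H2] _ Eb cardI])
        then show False using free by (simp add: identify_family_def)
      next
        assume fg: "f a = g d \<and> f b = g c"
        have cd': "{d, c} \<in> snd H2" using cd by (simp add: insert_commute)
        have "ecopy E (identify H1 H2 a b d c) (\<lambda>z. case z of Inl u \<Rightarrow> f u | Inr v \<Rightarrow> g v)"
          using glue[OF ab cd' f(1) g(1)] fg disj N1_def N2_def by (simp add: insert_commute)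
        then have "contains_copy ({..<n}, E) (identify H1 H2 a b d c)"
          by (rule ecopy_copy[OF identify_fin[OF finV1 finV2] identify_NV[OF H1 H2] _ Eb cardI])
        then show False using free by (simp add: identify_family_def)
      qed
    qed
  qed
  have F2_le: "card F2 \<le> ex n {H2}"
  proof (rule free_le_ex)
    show "is_graph ({..<n}, F2)" using G unfolding is_graph_def F2_def by auto
    show "\<not> contains_copy ({..<n}, F2) H2"
    proof
      assume "contains_copy ({..<n}, F2) H2"
      then obtain g where g: "ecopy F2 H2 g" using copy_ecopy[OF H2] by fastforce
      then have "g ` {c,d} \<in> F2" using cd unfolding ecopy_def by auto
      moreover have "ecopy E H2 g" using g unfolding ecopy_def F2_def by auto
      ultimately show False unfolding F2_def by auto
    qed
  qed
  have F1_le: "card (F1 S) \<le> ex n {H1}" for S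
  proof (rule free_le_ex)
    show "is_graph ({..<n}, F1 S)" using G unfolding is_graph_def F1_def ES_def by auto
    show "\<not> contains_copy ({..<n}, F1 S) H1"
    proof
      assume "contains_copy ({..<n}, F1 S) H1"
      then obtain f where f: "ecopy (F1 S) H1 f" using copy_ecopy[OF H1] by fastforce
      then have "f ` {a,b} \<in> F1 S" using ab unfolding ecopy_def by auto
      moreover have "ecopy (ES S) H1 f" using f unfolding ecopy_def F1_def by auto
      ultimately show False unfolding F1_def by auto
    qed
  qed
  have NR_le: "card NR \<le> 2 ^ (k2 + 2) * ex n {H1}"
  proof -
    have "\<forall>e\<in>NR. \<exists>W. W \<subseteq> U \<and> card W \<le> k2 \<and> W \<inter> e = {} \<and>
      \<not>(\<exists>f. ecopy E H1 f \<and> f`{a,b} = e \<and> f`N1 \<inter> W = {})" unfolding NR_def by blast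
    then obtain Wf where Wf: "\<forall>e\<in>NR. Wf e \<subseteq> U \<and> card (Wf e) \<le> k2 \<and> Wf e \<inter> e = {} \<and>
      \<not>(\<exists>f. ecopy E H1 f \<and> f`{a,b} = e \<and> f`N1 \<inter> Wf e = {})" by metis
    define P where "P e = {S. e \<subseteq> S \<and> S \<subseteq> U - Wf e}" for e
    have NRE: "NR \<subseteq> E" unfolding NR_def by auto
    have finNR: "finite NR" using finite_subset[OF NRE finE] .
    have PF: "S \<in> Pow U \<and> e \<in> F1 S" if e: "e \<in> NR" and S: "S \<in> P e" for e S
    proof -
      have eS: "e \<subseteq> S" and SU: "S \<subseteq> U - Wf e" using S P_def by auto
      have eES: "e \<in> ES S" using e eS NRE ES_def by auto
      have "\<not>(\<exists>f. ecopy (ES S) H1 f \<and> f`{a,b} = e)"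
      proof
        assume "\<exists>f. ecopy (ES S) H1 f \<and> f`{a,b} = e"
        then obtain f where f: "ecopy (ES S) H1 f" "f`{a,b} = e" by blast
        have "f ` N1 \<subseteq> S" using ecopy_img[OF f(1)] N1_def ES_def by blast
        then have "f ` N1 \<inter> Wf e = {}" using SU by blast
        moreover have "ecopy E H1 f" using f(1) unfolding ecopy_def ES_def by auto
        ultimately show False using Wf e f(2) by blast
      qed
      then show ?thesis using eES SU F1_def by auto
    qed
    have Pcard: "2 ^ (n - (k2 + 2)) \<le> card (P e)" if e: "e \<in> NR" for e
    proof -
      have WU: "Wf e \<subseteq> U" and Wk: "card (Wf e) \<le> k2" and We: "Wf e \<inter> e = {}" using Wf e by auto
      have eE: "e \<in> E" using e NRE by auto
      then obtain x y where xy: "e = {x, y}" using G unfolding is_graph_def by auto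
      have ce: "card e \<le> 2" using xy by (simp add: card_insert_if)
      have eU: "e \<subseteq> U" using eE EU by auto
      have finW: "finite (Wf e)" using WU finU finite_subset by auto
      have fine: "finite e" using xy by simp
      let ?X = "U - (Wf e \<union> e)"
      have "P e = (\<lambda>T. T \<union> e) ` Pow ?X"
      proof
        show "P e \<subseteq> (\<lambda>T. T \<union> e) ` Pow ?X"
        proof
          fix S assume "S \<in> P e"
          then have "S = (S - e) \<union> e" "S - e \<in> Pow ?X" using P_def by auto
          then show "S \<in> (\<lambda>T. T \<union> e) ` Pow ?X" by blast
        qed
        show "(\<lambda>T. T \<union> e) ` Pow ?X \<subseteq> P e" using eU We P_def by auto
      qed
      moreover have "inj_on (\<lambda>T. T \<union> e) (Pow ?X)"
        by (rule inj_onI) blast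
      ultimately have "card (P e) = 2 ^ card ?X"
        using card_image card_Pow finU by (metis finite_Diff)
      moreover have "n - (k2 + 2) \<le> card ?X"
      proof -
        have "card (Wf e \<union> e) \<le> k2 + 2" using card_Un_le[of "Wf e" e] Wk ce by linarith
        moreover have "card U - card (Wf e \<union> e) \<le> card ?X"
          using diff_card_le_card_Diff finW fine by blast
        ultimately show ?thesis using U_def by simp
      qed
      ultimately show ?thesis by simp
    qed
    have finP: "finite (P e)" for e using P_def finU by (simp add: finite_subset[of _ "Pow U"] subset_iff)
    have finF1: "finite (F1 S)" for S using finE F1_def ES_def by auto
    have "card (SIGMA e:NR. P e) \<le> card (SIGMA S:Pow U. F1 S)"
    proof (rule card_inj_on_le[where f = "\<lambda>(e, S). (S, e)"])
      show "inj_on (\<lambda>(e, S). (S, e)) (SIGMA e:NR. P e)" by (auto simp: inj_on_def)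
      show "(\<lambda>(e, S). (S, e)) ` (SIGMA e:NR. P e) \<subseteq> (SIGMA S:Pow U. F1 S)" using PF by auto
      show "finite (SIGMA S:Pow U. F1 S)" using finU finF1 by auto
    qed
    moreover have "card (SIGMA e:NR. P e) = (\<Sum>e\<in>NR. card (P e))" using finNR finP by simp
    moreover have "card (SIGMA S:Pow U. F1 S) = (\<Sum>S\<in>Pow U. card (F1 S))" using finU finF1 by simp
    moreover have "card NR * 2 ^ (n - (k2 + 2)) \<le> (\<Sum>e\<in>NR. card (P e))"
      using sum_bounded_below[of NR "2 ^ (n - (k2 + 2))" "\<lambda>e. card (P e)"] Pcard by simp
    moreover have "(\<Sum>S\<in>Pow U. card (F1 S)) \<le> 2 ^ n * ex n {H1}"
      using sum_bounded_above[of "Pow U" "\<lambda>S. card (F1 S)" "ex n {H1}"] F1_le card_Pow[of "{..<n}"] U_def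
      by simp
    ultimately have le: "card NR * 2 ^ (n - (k2 + 2)) \<le> 2 ^ n * ex n {H1}" by linarith
    have k2n: "k2 + 2 \<le> n" using nbig k2_def by simp
    have "(2::nat) ^ n = 2 ^ (k2 + 2) * 2 ^ (n - (k2 + 2))"
      using k2n by (metis le_add_diff_inverse power_add)
    then have "card NR * 2 ^ (n - (k2 + 2)) \<le> (2 ^ (k2 + 2) * ex n {H1}) * 2 ^ (n - (k2 + 2))"
      using le by (simp add: algebra_simps)
    then show ?thesis by simp
  qed
  have "card E \<le> card (F2 \<union> NR)" using cover finE F2_def NR_def by (intro card_mono) auto
  also have "\<dots> \<le> card F2 + card NR" by (rule card_Un_le)
  finally show ?thesis using F2_le NR_le k2_def by simp
qed

theorem theorem1p2:
  fixes H1 :: "'a graph" and H2 :: "'b graph" and \<alpha> \<beta> :: real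
    and a b :: 'a and c d :: 'b
  assumes "is_graph H1" "is_graph H2" "bipartite H1" "bipartite H2"
    and "(\<lambda>n. real (ex n {H1})) \<in> O(\<lambda>n. real n powr (1 + \<alpha>))"
    and "(\<lambda>n. real (ex n {H2})) \<in> O(\<lambda>n. real n powr (1 + \<beta>))"
    and "a \<noteq> b" "{a, b} \<in> snd H1"
    and "c \<noteq> d" "{c, d} \<in> snd H2"
  shows "(\<lambda>n. real (ex n (identify_family H1 H2 a b c d)))
           \<in> O(\<lambda>n. real n powr (1 + max \<alpha> \<beta>))"
proof -
  note A = assms
  let ?g = "max \<alpha> \<beta>"
  let ?K = "2 ^ (card (fst H2) + 2) :: nat"
  let ?n0 = "card (fst H1) + card (fst H2) + 2"
  from A(5) obtain c1 where c1: "c1 > 0"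
    "eventually (\<lambda>n. norm (real (ex n {H1})) \<le> c1 * norm (real n powr (1 + \<alpha>))) at_top"
    by (rule landau_o.bigE)
  from A(6) obtain c2 where c2: "c2 > 0"
    "eventually (\<lambda>n. norm (real (ex n {H2})) \<le> c2 * norm (real n powr (1 + \<beta>))) at_top"
    by (rule landau_o.bigE)
  have ev0: "eventually (\<lambda>n::nat. ?n0 \<le> n \<and> 1 \<le> n) at_top"
    using eventually_ge_at_top[of "?n0 + 1"] by (rule eventually_mono) auto
  have bound: "ex n (identify_family H1 H2 a b c d) \<le> ex n {H2} + ?K * ex n {H1}"
    if n: "?n0 \<le> n" for n
  proof (rule ex_le)
    show "\<forall>H\<in>identify_family H1 H2 a b c d. snd H \<noteq> {}"
      using A(8) by (auto simp: identify_family_def identify_def)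
    fix E :: "nat set set"
    assume "is_graph ({..<n}, E)" "\<forall>H\<in>identify_family H1 H2 a b c d. \<not> contains_copy ({..<n}, E) H"
    then show "card E \<le> ex n {H2} + ?K * ex n {H1}"
      using main_bound[OF A(1) A(2) A(8) A(10)] n by blast
  qed
  have "eventually (\<lambda>n. norm (real (ex n (identify_family H1 H2 a b c d)))
      \<le> (c2 + real ?K * c1) * norm (real n powr (1 + ?g))) at_top"
    using ev0 c1(2) c2(2)
  proof eventually_elim
    case (elim n)
    have n1: "1 \<le> real n" using elim(1) by simp
    have pa: "real n powr (1 + \<alpha>) \<le> real n powr (1 + ?g)" using n1 by (intro powr_mono) auto
    have pb: "real n powr (1 + \<beta>) \<le> real n powr (1 + ?g)" using n1 by (intro powr_mono) auto
    have "real (ex n (identify_family H1 H2 a b c d)) \<le> real (ex n {H2}) + real ?K * real (ex n {H1})"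
      using bound[of n] elim(1) by (metis of_nat_add of_nat_le_iff of_nat_mult)
    also have "\<dots> \<le> c2 * real n powr (1 + \<beta>) + real ?K * (c1 * real n powr (1 + \<alpha>))"
      using elim(2,3) by (intro add_mono mult_left_mono) auto
    also have "\<dots> \<le> c2 * real n powr (1 + ?g) + real ?K * (c1 * real n powr (1 + ?g))"
      using pa pb c1(1) c2(1) by (intro add_mono mult_left_mono) auto
    also have "\<dots> = (c2 + real ?K * c1) * norm (real n powr (1 + ?g))"
      by (simp add: algebra_simps)
    finally show ?case by simp
  qed
  moreover have "c2 + real ?K * c1 > 0" using c1(1) c2(1) by (simp add: add_pos_pos)
  ultimately show ?thesis by (intro landau_o.bigI) auto
qed

end
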